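(* For every positive integer $m$ and all complex numbers $\alpha \neq 0$ and $x$, $$\sum_{k=1}^m \binom{m}{k} k^\alpha x^k = \sum_{j=1}^m \binom{m}{j} j!\, S(\alpha, j)\, x^j (1+x)^{m-j}.$$
   Context: For a complex number $\alpha \neq 0$ and a positive integer $k$, the Stirling function of the second kind is $$S(\alpha, k) = \frac{1}{k!} \sum_{j=1}^k (-1)^{k-j} \binom{k}{j} j^\alpha,$$ where for a positive integer $j$, $j^\alpha = e^{\alpha \ln j}$ with $\ln j$ the real logarithm. Here $(1+x)^0 = 1$ for all $x$. *)

theory Defs
  imports Complex_Main
begin

definition natpow :: "nat \<Rightarrow> complex \<Rightarrow> complex" where
  "natpow j \<alpha> = exp (\<alpha> * complex_of_real (ln (real j)))"

definition stirling_fun :: "complex \<Rightarrow> nat \<Rightarrow> complex" where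
  "stirling_fun \<alpha> k = (1 / of_nat (fact k)) *
     (\<Sum>j=1..k. (-1) ^ (k - j) * of_nat (k choose j) * natpow j \<alpha>)"

end

theory Submission
  imports Defs
begin

lemma inner_binom:
  fixes x :: complex
  assumes "i \<le> m"
  shows "(\<Sum>j=i..m. of_nat (m choose j) * of_nat (j choose i) * (-1)^(j-i) * x^j * (1+x)^(m-j))
         = of_nat (m choose i) * x^i"
proof -
  define n where "n = m - i"
  have "(\<Sum>j=i..m. of_nat (m choose j) * of_nat (j choose i) * (-1)^(j-i) * x^j * (1+x)^(m-j))
      = (\<Sum>l=0..n. of_nat (m choose (i+l)) * of_nat ((i+l) choose i) * (-1)^l * x^(i+l) * (1+x)^(n-l))"
    unfolding n_def
    by (rule sum.reindex_bij_witness[where i="\<lambda>l. i + l" and j="\<lambda>j. j - i"]) (use assms in auto)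
  also have "\<dots> = (\<Sum>l=0..n. of_nat (m choose i) * x^i * (of_nat (n choose l) * (-x)^l * (1+x)^(n-l)))"
  proof (rule sum.cong[OF refl])
    fix l assume l: "l \<in> {0..n}"
    have "(m choose (i+l)) * ((i+l) choose i) = (m choose i) * (n choose l)"
    proof -
      have "i + l \<le> m" using l assms n_def by simp
      then have "(m choose (i+l)) * ((i+l) choose i) = (m choose i) * ((m - i) choose (i + l - i))"
        by (intro choose_mult) simp_all
      moreover have "i + l - i = l" by simp
      ultimately show ?thesis unfolding n_def by simp
    qed
    hence e1: "(of_nat (m choose (i+l)) * of_nat ((i+l) choose i) :: complex) = of_nat (m choose i) * of_nat (n choose l)"
      by (metis of_nat_mult)
    have e2: "(-1)^l * x^(i+l) = x^i * (-x)^l"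
    proof -
      have "(-x)^l = (-1)^l * x^l" by (rule power_minus)
      moreover have "x^(i+l) = x^i * x^l" by (rule power_add)
      ultimately show ?thesis by (simp only: ac_simps)
    qed
    show "of_nat (m choose (i+l)) * of_nat ((i+l) choose i) * (-1)^l * x^(i+l) * (1+x)^(n-l)
        = of_nat (m choose i) * x^i * (of_nat (n choose l) * (-x)^l * (1+x)^(n-l))"
      proof -
      have "of_nat (m choose (i+l)) * of_nat ((i+l) choose i) * (-1)^l * x^(i+l) * (1+x)^(n-l)
          = (of_nat (m choose (i+l)) * of_nat ((i+l) choose i)) * ((-1)^l * x^(i+l)) * (1+x)^(n-l)"
        by (simp only: mult.assoc)
      also have "\<dots> = (of_nat (m choose i) * of_nat (n choose l)) * (x^i * (-x)^l) * (1+x)^(n-l)"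
        by (simp only: e1 e2)
      finally show ?thesis by (simp only: ac_simps)
    qed
  qed
  also have "\<dots> = of_nat (m choose i) * x^i * ((-x) + (1+x))^n"
    by (simp only: binomial_ring[of "-x" "1+x" n] sum_distrib_left atLeast0AtMost)
  also have "\<dots> = of_nat (m choose i) * x^i" by simp
  finally show ?thesis .
qed

lemma general:
  fixes x :: complex and a :: "nat \<Rightarrow> complex"
  shows "(\<Sum>j=0..m. of_nat (m choose j) * (\<Sum>i=0..j. (-1)^(j-i) * of_nat (j choose i) * a i) * x^j * (1+x)^(m-j))
       = (\<Sum>i=0..m. of_nat (m choose i) * a i * x^i)"
proof -
  have "(\<Sum>j=0..m. of_nat (m choose j) * (\<Sum>i=0..j. (-1)^(j-i) * of_nat (j choose i) * a i) * x^j * (1+x)^(m-j))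
      = (\<Sum>j=0..m. \<Sum>i=0..m. if i \<le> j then a i * (of_nat (m choose j) * of_nat (j choose i) * (-1)^(j-i) * x^j * (1+x)^(m-j)) else 0)"
  proof (rule sum.cong[OF refl])
    fix j assume j: "j \<in> {0..m}"
    have "(\<Sum>i=0..m. if i \<le> j then a i * (of_nat (m choose j) * of_nat (j choose i) * (-1)^(j-i) * x^j * (1+x)^(m-j)) else 0)
        = (\<Sum>i\<in>{0..j}. a i * (of_nat (m choose j) * of_nat (j choose i) * (-1)^(j-i) * x^j * (1+x)^(m-j)))"
      using j by (intro sum.mono_neutral_cong_right) auto
    thus "of_nat (m choose j) * (\<Sum>i=0..j. (-1)^(j-i) * of_nat (j choose i) * a i) * x^j * (1+x)^(m-j)
        = (\<Sum>i=0..m. if i \<le> j then a i * (of_nat (m choose j) * of_nat (j choose i) * (-1)^(j-i) * x^j * (1+x)^(m-j)) else 0)"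
      by (simp add: sum_distrib_left sum_distrib_right algebra_simps)
  qed
  also have "\<dots> = (\<Sum>i=0..m. \<Sum>j=0..m. if i \<le> j then a i * (of_nat (m choose j) * of_nat (j choose i) * (-1)^(j-i) * x^j * (1+x)^(m-j)) else 0)"
    by (rule sum.swap)
  also have "\<dots> = (\<Sum>i=0..m. a i * (\<Sum>j=i..m. of_nat (m choose j) * of_nat (j choose i) * (-1)^(j-i) * x^j * (1+x)^(m-j)))"
  proof (rule sum.cong[OF refl])
    fix i assume i: "i \<in> {0..m}"
    have "(\<Sum>j=0..m. if i \<le> j then a i * (of_nat (m choose j) * of_nat (j choose i) * (-1)^(j-i) * x^j * (1+x)^(m-j)) else 0)
        = (\<Sum>j\<in>{i..m}. a i * (of_nat (m choose j) * of_nat (j choose i) * (-1)^(j-i) * x^j * (1+x)^(m-j)))"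
      using i by (intro sum.mono_neutral_cong_right) auto
    thus "(\<Sum>j=0..m. if i \<le> j then a i * (of_nat (m choose j) * of_nat (j choose i) * (-1)^(j-i) * x^j * (1+x)^(m-j)) else 0)
        = a i * (\<Sum>j=i..m. of_nat (m choose j) * of_nat (j choose i) * (-1)^(j-i) * x^j * (1+x)^(m-j))"
      by (simp add: sum_distrib_left)
  qed
  also have "\<dots> = (\<Sum>i=0..m. of_nat (m choose i) * a i * x^i)"
    by (rule sum.cong[OF refl]) (simp add: inner_binom)
  finally show ?thesis .
qed

theorem proposition2:
  fixes m :: nat and \<alpha> x :: complex
  assumes "m \<ge> 1" and "\<alpha> \<noteq> 0"
  shows "(\<Sum>k=1..m. of_nat (m choose k) * natpow k \<alpha> * x ^ k) =
         (\<Sum>j=1..m. of_nat (m choose j) * of_nat (fact j) * stirling_fun \<alpha> j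
                      * x ^ j * (1 + x) ^ (m - j))"
proof -
  define a where "a i = (if i = 0 then 0 else natpow i \<alpha>)" for i
  have G: "(\<Sum>j=0..m. of_nat (m choose j) * (\<Sum>i=0..j. (-1)^(j-i) * of_nat (j choose i) * a i) * x^j * (1+x)^(m-j))
       = (\<Sum>i=0..m. of_nat (m choose i) * a i * x^i)" by (rule general)
  have L: "(\<Sum>i=0..m. of_nat (m choose i) * a i * x^i) = (\<Sum>k=1..m. of_nat (m choose k) * natpow k \<alpha> * x ^ k)"
    by (simp add: sum.atLeast_Suc_atMost a_def)
  have S: "of_nat (fact j) * stirling_fun \<alpha> j = (\<Sum>i=0..j. (-1)^(j-i) * of_nat (j choose i) * a i)" for j
  proof -
    have "(\<Sum>i=0..j. (-1)^(j-i) * of_nat (j choose i) * a i) = (\<Sum>i=1..j. (-1)^(j-i) * of_nat (j choose i) * natpow i \<alpha>)"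
      by (simp add: sum.atLeast_Suc_atMost a_def)
    thus ?thesis unfolding stirling_fun_def by simp
  qed
  have R: "(\<Sum>j=0..m. of_nat (m choose j) * (\<Sum>i=0..j. (-1)^(j-i) * of_nat (j choose i) * a i) * x^j * (1+x)^(m-j))
      = (\<Sum>j=1..m. of_nat (m choose j) * of_nat (fact j) * stirling_fun \<alpha> j * x ^ j * (1 + x) ^ (m - j))"
  proof -
    have "(\<Sum>j=0..m. of_nat (m choose j) * (\<Sum>i=0..j. (-1)^(j-i) * of_nat (j choose i) * a i) * x^j * (1+x)^(m-j))
       = (\<Sum>j=1..m. of_nat (m choose j) * (\<Sum>i=0..j. (-1)^(j-i) * of_nat (j choose i) * a i) * x^j * (1+x)^(m-j))"
      by (subst sum.atLeast_Suc_atMost) (simp_all add: a_def)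
    also have "\<dots> = (\<Sum>j=1..m. of_nat (m choose j) * of_nat (fact j) * stirling_fun \<alpha> j * x ^ j * (1 + x) ^ (m - j))"
      by (rule sum.cong[OF refl]) (simp only: S mult.assoc)
    finally show ?thesis .
  qed
  show ?thesis using G L R by simp
qed

end
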